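(* Assume the general single-user imperfect-prediction setting below. For $1\le\tau<\tau_n$ let $\tilde V^l(\tau)=V^l(\tau)$ and $\tilde V^u(\tau)=V^u(\tau)$, and for $\tau_n\le\tau\le\tau_n+D_n$ define $$\tilde V^l(\tau)=\max_{e\in\mathcal E,e>0}\Big\{-(1-p)\frac{1-[1-\zeta(i^{\min},e)]^{\tau-\tau_n}}{\zeta(i^{\min},e)}\lambda e+p\,\frac{1-[1-\zeta(i^{\min},e)]^{\tau}}{\zeta(i^{\min},e)}\big[-\lambda e+\zeta(i^{\min},e)\beta\big]\Big\},$$ $$\tilde V^u(\tau)=\sum_{z=\tau_n+1}^{\tau}\max_{e\in\mathcal E}\Big\{-\lambda e+\zeta(i^{\max},e)\big(p\beta-\max\{0,\tilde V^l(\tau_n),\tilde V^l(z-1)\}\big)\Big\}+p\sum_{z=1}^{\tau_n}\max_{e\in\mathcal E}\Big\{-\lambda e+\zeta(i^{\max},e)\big(\beta-\max\{0,V^l(z-1)\}\big)\Big\}.$$ Then for every state $i$ and every $1\le w\le D_n$, $$\max\{0,\tilde V^l(\tau_n),\tilde V^l(\tau_n+w)\}\le V^I(0,\tau_n+w,i)\le\min\{p\beta,\tilde V^u(\tau_n+w)\}.$$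
   Context: Setting: fix $\beta\ge0$, $\lambda\ge0$, $p\in(0,1]$, integers $\tau_n\ge1$, $D_n\ge1$. The channel is a Markov chain on $\{1,\dots,K\}$ with transition matrix $(P^{i,j})$; $\mathcal E\subset[0,\infty)$ is a finite set containing $0$ and a positive element; $\zeta(i,\cdot):\mathcal E\to[0,1]$ with $\zeta(i,0)=0$, $\zeta(i,e)>0$ for $e>0$, strictly increasing (restriction of a concave strictly increasing function). States are totally ordered by $\zeta$: for every $i,j$ either $\zeta(i,e)\ge\zeta(j,e)$ for all $e$ or $\le$ for all $e$; $i^{\max}$ ($i^{\min}$) is a state with $\zeta(i^{\max},e)\ge\zeta(i,e)$ ($\zeta(i^{\min},e)\le\zeta(i,e)$) for all $i,e$. Auxiliary functions: $V^l(0)=0$, $V^l(\tau)=\max_{e\in\mathcal E,e>0}\frac{1-[1-\zeta(i^{\min},e)]^{\tau}}{\zeta(i^{\min},e)}[-\lambda e+\zeta(i^{\min},e)\beta]$ for $\tau\ge1$; $V^u(0)=0$, $V^u(\tau)=\sum_{z=1}^{\tau}\max_{e\in\mathcal E}\{-\lambda e+\zeta(i^{\max},e)(\beta-\max\{0,V^l(z-1)\})\}$. Imperfect-prediction value function of a predicted packet (each prediction is correct with probability $p$, verified at its arrival time; $\tau$ = slots until deadline, deadline $\tau_n$ after arrival, window $D_n$): $V^I(0,0,i)=0$; $V^I(0,\tau,i)=\max_{e\in\mathcal E}\{-\lambda e+\zeta(i,e)\beta+(1-\zeta(i,e))\sum_jP^{i,j}V^I(0,\tau-1,j)\}$ for $1\le\tau\le\tau_n$;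 $V^I(0,\tau_n+1,i)=\max_{e\in\mathcal E}\{-\lambda e+\zeta(i,e)p\beta+p(1-\zeta(i,e))\sum_jP^{i,j}V^I(0,\tau_n,j)\}$; $V^I(0,\tau,i)=\max_{e\in\mathcal E}\{-\lambda e+\zeta(i,e)p\beta+(1-\zeta(i,e))\sum_jP^{i,j}V^I(0,\tau-1,j)\}$ for $\tau_n+2\le\tau\le\tau_n+D_n$. *)

theory Defs
  imports "HOL-Analysis.Analysis"
begin

text \<open>States form a finite type 'i; P is the transition matrix, E the finite energy set,
  zeta the success probability function, imin / imax extreme states.\<close>

definition setting ::
  "real \<Rightarrow> real \<Rightarrow> real \<Rightarrow> nat \<Rightarrow> nat \<Rightarrow> real set \<Rightarrow> ('i::finite \<Rightarrow> real \<Rightarrow> real)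
   \<Rightarrow> ('i \<Rightarrow> 'i \<Rightarrow> real) \<Rightarrow> 'i \<Rightarrow> 'i \<Rightarrow> bool" where
  "setting beta lam p taun Dn E zeta P imin imax \<longleftrightarrow>
     beta \<ge> 0 \<and> lam \<ge> 0 \<and> 0 < p \<and> p \<le> 1 \<and> taun \<ge> 1 \<and> Dn \<ge> 1 \<and>
     (\<forall>i j. P i j \<ge> 0) \<and> (\<forall>i. (\<Sum>j\<in>UNIV. P i j) = 1) \<and>
     finite E \<and> E \<subseteq> {0..} \<and> 0 \<in> E \<and> (\<exists>e\<in>E. e > 0) \<and>
     (\<forall>i. zeta i 0 = 0) \<and>
     (\<forall>i. \<forall>e\<in>E. 0 \<le> zeta i e \<and> zeta i e \<le> 1) \<and>
     (\<forall>i. \<forall>e\<in>E. e > 0 \<longrightarrow> zeta i e > 0) \<and>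
     (\<forall>i. \<forall>e1\<in>E. \<forall>e2\<in>E. e1 < e2 \<longrightarrow> zeta i e1 < zeta i e2) \<and>
     (\<forall>i. \<exists>g. concave_on {0..} g \<and> strict_mono_on {0..} g \<and> (\<forall>e\<in>E. zeta i e = g e)) \<and>
     (\<forall>i j. (\<forall>e\<in>E. zeta i e \<ge> zeta j e) \<or> (\<forall>e\<in>E. zeta i e \<le> zeta j e)) \<and>
     (\<forall>i. \<forall>e\<in>E. zeta imax e \<ge> zeta i e) \<and>
     (\<forall>i. \<forall>e\<in>E. zeta imin e \<le> zeta i e)"

definition Vl :: "real \<Rightarrow> real \<Rightarrow> real set \<Rightarrow> ('i \<Rightarrow> real \<Rightarrow> real) \<Rightarrow> 'i \<Rightarrow> nat \<Rightarrow> real" where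
  "Vl beta lam E zeta imin tau =
     (if tau = 0 then 0 else
      Max ((\<lambda>e. (1 - (1 - zeta imin e) ^ tau) / zeta imin e * (- lam * e + zeta imin e * beta))
            ` {e\<in>E. e > 0}))"

definition Vu :: "real \<Rightarrow> real \<Rightarrow> real set \<Rightarrow> ('i \<Rightarrow> real \<Rightarrow> real) \<Rightarrow> 'i \<Rightarrow> 'i \<Rightarrow> nat \<Rightarrow> real" where
  "Vu beta lam E zeta imin imax tau =
     (\<Sum>z=1..tau. Max ((\<lambda>e. - lam * e + zeta imax e * (beta - max 0 (Vl beta lam E zeta imin (z - 1)))) ` E))"

text \<open>Imperfect-prediction value function V^I(0,tau,i) (only meaningful for tau \<le> taun + Dn).\<close>
fun VI :: "real \<Rightarrow> real \<Rightarrow> real \<Rightarrow> nat \<Rightarrow> real set \<Rightarrow> ('i::finite \<Rightarrow> real \<Rightarrow> real)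
           \<Rightarrow> ('i \<Rightarrow> 'i \<Rightarrow> real) \<Rightarrow> nat \<Rightarrow> 'i \<Rightarrow> real" where
  "VI beta lam p taun E zeta P 0 i = 0"
| "VI beta lam p taun E zeta P (Suc t) i =
     (if Suc t \<le> taun then
        Max ((\<lambda>e. - lam * e + zeta i e * beta
                 + (1 - zeta i e) * (\<Sum>j\<in>UNIV. P i j * VI beta lam p taun E zeta P t j)) ` E)
      else if Suc t = taun + 1 then
        Max ((\<lambda>e. - lam * e + zeta i e * p * beta
                 + p * (1 - zeta i e) * (\<Sum>j\<in>UNIV. P i j * VI beta lam p taun E zeta P t j)) ` E)
      else
        Max ((\<lambda>e. - lam * e + zeta i e * p * beta
                 + (1 - zeta i e) * (\<Sum>j\<in>UNIV. P i j * VI beta lam p taun E zeta P t j)) ` E))"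

definition Vlt :: "real \<Rightarrow> real \<Rightarrow> real \<Rightarrow> nat \<Rightarrow> real set \<Rightarrow> ('i \<Rightarrow> real \<Rightarrow> real) \<Rightarrow> 'i \<Rightarrow> nat \<Rightarrow> real" where
  "Vlt beta lam p taun E zeta imin tau =
     (if tau < taun then Vl beta lam E zeta imin tau else
      Max ((\<lambda>e. - (1 - p) * ((1 - (1 - zeta imin e) ^ (tau - taun)) / zeta imin e) * lam * e
                 + p * ((1 - (1 - zeta imin e) ^ tau) / zeta imin e) * (- lam * e + zeta imin e * beta))
            ` {e\<in>E. e > 0}))"

definition Vut :: "real \<Rightarrow> real \<Rightarrow> real \<Rightarrow> nat \<Rightarrow> real set \<Rightarrow> ('i \<Rightarrow> real \<Rightarrow> real) \<Rightarrow> 'i \<Rightarrow> 'i \<Rightarrow> nat \<Rightarrow> real" where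
  "Vut beta lam p taun E zeta imin imax tau =
     (if tau < taun then Vu beta lam E zeta imin imax tau else
      (\<Sum>z=taun+1..tau. Max ((\<lambda>e. - lam * e + zeta imax e *
            (p * beta - max (max 0 (Vlt beta lam p taun E zeta imin taun))
                                (Vlt beta lam p taun E zeta imin (z - 1)))) ` E))
      + p * (\<Sum>z=1..taun. Max ((\<lambda>e. - lam * e + zeta imax e *
            (beta - max 0 (Vl beta lam E zeta imin (z - 1)))) ` E)))"

end

theory Submission
  imports Defs
begin

lemma key_lo:
  fixes z zi B G L :: real
  assumes "z \<le> zi" "0 \<le> z" "z \<le> 1" "L \<le> G" "G \<le> B"
  shows "z * B + (1 - z) * L \<le> zi * B + (1 - zi) * G"
proof -
  have "z * (B - G) \<le> zi * (B - G)" using assms by (intro mult_right_mono) auto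
  moreover have "(1 - z) * L \<le> (1 - z) * G" using assms by (intro mult_left_mono) auto
  ultimately show ?thesis by (simp add: algebra_simps)
qed

lemma key_up:
  fixes zm zi B G L U :: real
  assumes "0 \<le> zi" "zi \<le> zm" "L \<le> G" "G \<le> B" "G \<le> U"
  shows "zi * B + (1 - zi) * G \<le> zm * (B - L) + U"
proof -
  have "zi * (B - G) \<le> zi * (B - L)" using assms by (intro mult_left_mono) auto
  moreover have "zi * (B - L) \<le> zm * (B - L)" using assms by (intro mult_right_mono) auto
  ultimately show ?thesis using assms by (simp add: algebra_simps)
qed

context
  fixes beta lam p :: real and taun Dn :: nat and E :: "real set"
    and zeta :: "'i::finite \<Rightarrow> real \<Rightarrow> real" and P :: "'i \<Rightarrow> 'i \<Rightarrow> real"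
    and imin imax :: 'i
  assumes S: "setting beta lam p taun Dn E zeta P imin imax"
begin

abbreviation "V t i \<equiv> VI beta lam p taun E zeta P t i"
abbreviation "EV t i \<equiv> (\<Sum>j\<in>UNIV. P i j * V t j)"

lemma facts:
  "beta \<ge> 0" "lam \<ge> 0" "0 < p" "p \<le> 1" "taun \<ge> 1"
  "\<And>i j. P i j \<ge> 0" "\<And>i. (\<Sum>j\<in>UNIV. P i j) = 1"
  "finite E" "E \<subseteq> {0..}" "0 \<in> E" "\<And>i. zeta i 0 = 0"
  "\<And>i e. e \<in> E \<Longrightarrow> 0 \<le> zeta i e" "\<And>i e. e \<in> E \<Longrightarrow> zeta i e \<le> 1"
  "\<And>i e. e \<in> E \<Longrightarrow> e > 0 \<Longrightarrow> zeta i e > 0"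
  "\<And>i e. e \<in> E \<Longrightarrow> zeta imax e \<ge> zeta i e"
  "\<And>i e. e \<in> E \<Longrightarrow> zeta imin e \<le> zeta i e"
  "\<exists>e\<in>E. e > 0"
  using S unfolding setting_def by auto

lemma EV_ge:
  assumes "\<And>j. L \<le> f j"
  shows "L \<le> (\<Sum>j\<in>UNIV. P i j * f j)"
proof -
  have "(\<Sum>j\<in>UNIV. P i j * L) \<le> (\<Sum>j\<in>UNIV. P i j * f j)"
    by (rule sum_mono) (simp add: mult_left_mono facts(6) assms)
  moreover have "(\<Sum>j\<in>UNIV. P i j * L) = L"
    by (simp add: sum_distrib_right[symmetric] facts(7))
  ultimately show ?thesis by simp
qed

lemma EV_le:
  assumes "\<And>j. f j \<le> U"
  shows "(\<Sum>j\<in>UNIV. P i j * f j) \<le> U"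
proof -
  have "(\<Sum>j\<in>UNIV. P i j * f j) \<le> (\<Sum>j\<in>UNIV. P i j * U)"
    by (rule sum_mono) (simp add: mult_left_mono facts(6) assms)
  moreover have "(\<Sum>j\<in>UNIV. P i j * U) = U"
    by (simp add: sum_distrib_right[symmetric] facts(7))
  ultimately show ?thesis by simp
qed

lemma Max_geE:
  assumes "e \<in> E" "x \<le> F e"
  shows "x \<le> Max (F ` E)"
  using assms facts(8) by (meson Max_ge finite_imageI image_eqI order_trans)

lemma Max_leE:
  assumes "\<And>e. e \<in> E \<Longrightarrow> F e \<le> x"
  shows "Max (F ` E) \<le> x"
  using assms facts(8) facts(10) by (auto intro!: Max.boundedI)

lemma V_nonneg: "0 \<le> V t i"
proof (induction t arbitrary: i)
  case 0 then show ?case by simp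
next
  case (Suc t)
  have G: "0 \<le> EV t i" by (rule EV_ge) (use Suc in auto)
  have "0 \<le> p * EV t i" using G facts(3) by simp
  then show ?case using G facts(10,11)
    by (auto intro!: Max_geE[where e=0])
qed

lemma V_upper: "V t i \<le> (if t \<le> taun then beta else p * beta)"
proof (induction t arbitrary: i)
  case 0 then show ?case using facts(1,3) by simp
next
  case (Suc t)
  show ?case
  proof (cases "Suc t \<le> taun")
    case True
    have G: "EV t i \<le> beta" by (rule EV_le) (use Suc True in auto)
    have "V (Suc t) i \<le> beta"
      using True
      apply simp
      apply (rule Max_leE)
      subgoal for e
      proof -
        assume e: "e \<in> E"
        have "(1 - zeta i e) * (EV t i) \<le> (1 - zeta i e) * beta"
          using facts(13)[OF e] G by (intro mult_left_mono) auto
        moreover have "0 \<le> lam * e" using facts(2,9) e by auto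
        ultimately show ?thesis by (simp add: algebra_simps)
      qed
      done
    then show ?thesis using True by simp
  next
    case False
    show ?thesis
    proof (cases "Suc t = taun + 1")
      case True
      have G: "EV t i \<le> beta" by (rule EV_le) (use Suc True in auto)
      have G0: "0 \<le> EV t i" by (rule EV_ge) (use V_nonneg in auto)
      have "V (Suc t) i \<le> p * beta"
        using True False
        apply simp
        apply (rule Max_leE)
        subgoal for e
        proof -
          assume e: "e \<in> E"
          have "zeta i e * (p * beta) + (1 - zeta i e) * (p * EV t i) \<le> zeta i e * (p*beta - 0) + p * beta"
            apply (rule key_up)
            using facts(12,13)[OF e] G G0 facts(3,4,1)
            by (auto intro: mult_left_mono mult_nonneg_nonneg)
          moreover have "zeta i e * (p*beta) \<le> 1 * (p * beta) - (1 - zeta i e) * (p * beta)" by (simp add: algebra_simps)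
          moreover have "0 \<le> lam * e" using facts(2,9) e by auto
          moreover have "(1 - zeta i e) * (p * EV t i) \<le> (1 - zeta i e) * (p * beta)"
            using facts(13)[OF e] G facts(3) by (intro mult_left_mono) auto
          ultimately show ?thesis using True by (simp add: algebra_simps)
        qed
        done
      then show ?thesis using False by simp
    next
      case F2: False
      have G: "EV t i \<le> p * beta" by (rule EV_le) (use Suc False F2 in auto)
      have "V (Suc t) i \<le> p * beta"
        using F2 False
        apply simp
        apply (rule Max_leE)
        subgoal for e
        proof -
          assume e: "e \<in> E"
          have "(1 - zeta i e) * (EV t i) \<le> (1 - zeta i e) * (p * beta)"
            using facts(13)[OF e] G by (intro mult_left_mono) auto
          moreover have "0 \<le> lam * e" using facts(2,9) e by auto
          ultimately show ?thesis by (simp add: algebra_simps)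
        qed
        done
      then show ?thesis using False by simp
    qed
  qed
qed


lemma Max_leE2:
  assumes "\<And>e. e \<in> E \<Longrightarrow> e > 0 \<Longrightarrow> F e \<le> x"
  shows "Max (F ` {e\<in>E. e > 0}) \<le> x"
  using assms facts(8) facts(17) by (auto intro!: Max.boundedI)

lemma Max_geE2:
  assumes "e \<in> E" "e > 0"
  shows "F e \<le> Max (F ` {e\<in>E. e > 0})"
  using assms facts(8) by (intro Max_ge) auto

lemma A_rec:
  fixes z :: real assumes "z > 0"
  shows "(1 - (1 - z) ^ Suc n) / z = 1 + (1 - z) * ((1 - (1 - z) ^ n) / z)"
  using assms by (simp add: field_simps)

lemma VI_first: "V (Suc taun) i = Max ((\<lambda>e. - lam * e + zeta i e * p * beta
                 + p * (1 - zeta i e) * EV taun i) ` E)" by simp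

lemma VI_later: "taun < t \<Longrightarrow> V (Suc t) i = Max ((\<lambda>e. - lam * e + zeta i e * p * beta
                 + (1 - zeta i e) * EV t i) ` E)" by simp

lemma V_lower_fixed:
  assumes e: "e \<in> E" "e > 0" and "t \<le> taun"
  shows "(1 - (1 - zeta imin e) ^ t) / zeta imin e * (- lam * e + zeta imin e * beta) \<le> V t i"
  using assms(3)
proof (induction t arbitrary: i)
  case 0 then show ?case by simp
next
  case (Suc t)
  define z where "z = zeta imin e"
  have z: "0 < z" "z \<le> 1" "z \<le> zeta i e"
    using facts(14,13,16)[OF e(1)] e(2) z_def by auto
  define L where "L = (1 - (1 - z) ^ t) / z * (- lam * e + z * beta)"
  have LG: "L \<le> EV t i" unfolding L_def z_def by (rule EV_ge) (use Suc in auto)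
  have GB: "EV t i \<le> beta" by (rule EV_le) (use V_upper[of t] Suc in auto)
  have k: "z * beta + (1 - z) * L \<le> zeta i e * beta + (1 - zeta i e) * EV t i"
    by (rule key_lo) (use z LG GB in auto)
  have eq: "(1 - (1 - z) ^ Suc t) / z * (- lam * e + z * beta) = - lam * e + z * beta + (1 - z) * L"
    unfolding L_def A_rec[OF z(1)] by (simp add: algebra_simps)
  have "(1 - (1 - z) ^ Suc t) / z * (- lam * e + z * beta) \<le>
      - lam * e + zeta i e * beta + (1 - zeta i e) * EV t i"
    using eq k by simp
  then show ?case unfolding z_def using Suc.prems
    by (simp, intro Max_geE[OF e(1)]) simp
qed

lemma Vl_le:
  assumes "t \<le> taun" shows "Vl beta lam E zeta imin t \<le> V t i"
proof (cases "t = 0")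
  case True then show ?thesis by (simp add: Vl_def V_nonneg)
next
  case False
  have "Max ((\<lambda>e. (1 - (1 - zeta imin e) ^ t) / zeta imin e * (- lam * e + zeta imin e * beta))
            ` {e\<in>E. e > 0}) \<le> V t i"
    by (rule Max_leE2) (rule V_lower_fixed[OF _ _ assms])
  then show ?thesis using False by (simp add: Vl_def)
qed

lemma V_after_ge:
  assumes "\<And>j. B \<le> V taun j" "1 \<le> w"
  shows "p * B \<le> V (taun + w) i"
  using assms(2)
proof (induction w arbitrary: i)
  case 0 then show ?case by simp
next
  case (Suc w)
  show ?case
  proof (cases "w = 0")
    case True
    have "B \<le> EV taun i" by (rule EV_ge) (use assms in auto)
    then have "p * B \<le> p * EV taun i" using facts(3) by simp
    then show ?thesis using True facts(10,11) by (simp, intro Max_geE[where e=0]) auto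
  next
    case False
    have "p * B \<le> EV (taun + w) i" by (rule EV_ge) (use Suc False in auto)
    then show ?thesis using False facts(10,11) by (simp, intro Max_geE[where e=0]) auto
  qed
qed

lemma Vlt_taun: "Vlt beta lam p taun E zeta imin taun \<le> p * Vl beta lam E zeta imin taun"
proof -
  have "Max ((\<lambda>e. - (1 - p) * ((1 - (1 - zeta imin e) ^ (taun - taun)) / zeta imin e) * lam * e
                 + p * ((1 - (1 - zeta imin e) ^ taun) / zeta imin e) * (- lam * e + zeta imin e * beta))
            ` {e\<in>E. e > 0}) \<le> p * Max ((\<lambda>e. (1 - (1 - zeta imin e) ^ taun) / zeta imin e * (- lam * e + zeta imin e * beta))
            ` {e\<in>E. e > 0})"
  proof (rule Max_leE2)
    fix e assume e: "e \<in> E" "0 < e"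
    have "(1 - (1 - zeta imin e) ^ taun) / zeta imin e * (- lam * e + zeta imin e * beta) \<le>
       Max ((\<lambda>e. (1 - (1 - zeta imin e) ^ taun) / zeta imin e * (- lam * e + zeta imin e * beta))
            ` {e\<in>E. e > 0})" by (rule Max_geE2[OF e])
    from mult_left_mono[OF this, of p] facts(3)
    show "- (1 - p) * ((1 - (1 - zeta imin e) ^ (taun - taun)) / zeta imin e) * lam * e
                 + p * ((1 - (1 - zeta imin e) ^ taun) / zeta imin e) * (- lam * e + zeta imin e * beta)
          \<le> p * Max ((\<lambda>e. (1 - (1 - zeta imin e) ^ taun) / zeta imin e * (- lam * e + zeta imin e * beta))
            ` {e\<in>E. e > 0})" by simp
  qed
  then show ?thesis using facts(5) unfolding Vlt_def Vl_def by simp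
qed

lemma VI_lower_fixed:
  assumes e: "e \<in> E" "e > 0" and "1 \<le> w"
  shows "- (1 - p) * ((1 - (1 - zeta imin e) ^ w) / zeta imin e) * lam * e
                 + p * ((1 - (1 - zeta imin e) ^ (taun + w)) / zeta imin e) * (- lam * e + zeta imin e * beta)
         \<le> V (taun + w) i"
  using assms(3)
proof (induction w arbitrary: i)
  case 0 then show ?case by simp
next
  case (Suc w)
  define z where "z = zeta imin e"
  have z: "0 < z" "z \<le> 1" "z \<le> zeta i e"
    using facts(14,13,16)[OF e(1)] e(2) z_def by auto
  define c where "c = - lam * e + z * beta"
  show ?case
  proof (cases "w = 0")
    case True
    define L where "L = (1 - (1 - z) ^ taun) / z * c"
    have LG: "L \<le> EV taun i" unfolding L_def z_def c_def
      by (rule EV_ge) (use V_lower_fixed[OF e] in auto)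
    have GB: "EV taun i \<le> beta" by (rule EV_le) (use V_upper[of taun] in auto)
    have k: "z * (p*beta) + (1 - z) * (p*L) \<le> zeta i e * (p*beta) + (1 - zeta i e) * (p*EV taun i)"
      by (rule key_lo) (use z LG GB facts(3) in \<open>auto intro: mult_left_mono\<close>)
    have eq: "- (1 - p) * ((1 - (1 - z) ^ Suc w) / z) * lam * e
                 + p * ((1 - (1 - z) ^ (taun + Suc w)) / z) * c
          = - lam * e + z * (p*beta) + (1 - z) * (p*L)"
      unfolding L_def True using z(1) by (simp add: A_rec c_def field_simps)
    have "- (1 - p) * ((1 - (1 - z) ^ Suc w) / z) * lam * e
                 + p * ((1 - (1 - z) ^ (taun + Suc w)) / z) * c \<le>
       - lam * e + zeta i e * p * beta + p * (1 - zeta i e) * EV taun i"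
      using eq k by (simp add: algebra_simps)
    then show ?thesis unfolding z_def c_def True add_Suc_right add_0_right VI_first
      by (rule Max_geE[OF e(1)])
  next
    case False
    define L where "L = - (1 - p) * ((1 - (1 - z) ^ w) / z) * lam * e
                 + p * ((1 - (1 - z) ^ (taun + w)) / z) * c"
    have LG: "L \<le> EV (taun + w) i" unfolding L_def z_def c_def
      by (rule EV_ge) (use Suc False in auto)
    have GB: "EV (taun + w) i \<le> p * beta" by (rule EV_le) (use V_upper[of "taun + w"] False in auto)
    have k: "z * (p*beta) + (1 - z) * L \<le> zeta i e * (p*beta) + (1 - zeta i e) * EV (taun + w) i"
      by (rule key_lo) (use z LG GB in auto)
    have eq: "- (1 - p) * ((1 - (1 - z) ^ Suc w) / z) * lam * e
                 + p * ((1 - (1 - z) ^ (taun + Suc w)) / z) * c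
          = - lam * e + z * (p*beta) + (1 - z) * L"
      unfolding L_def add_Suc_right A_rec[OF z(1)] by (simp add: c_def algebra_simps)
    have "- (1 - p) * ((1 - (1 - z) ^ Suc w) / z) * lam * e
                 + p * ((1 - (1 - z) ^ (taun + Suc w)) / z) * c \<le>
       - lam * e + zeta i e * p * beta + (1 - zeta i e) * EV (taun + w) i"
      using eq k by (simp add: algebra_simps)
    moreover have lt: "taun < taun + w" using False by simp
    ultimately show ?thesis unfolding z_def c_def add_Suc_right VI_later[OF lt]
      by (intro Max_geE[OF e(1)])
  qed
qed

lemma lower_all:
  assumes "1 \<le> w"
  shows "max (max 0 (Vlt beta lam p taun E zeta imin taun)) (Vlt beta lam p taun E zeta imin (taun + w))
           \<le> V (taun + w) i"
proof -
  have a: "Vlt beta lam p taun E zeta imin taun \<le> V (taun + w) i"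
    by (rule order_trans[OF Vlt_taun V_after_ge[OF Vl_le[OF order_refl] assms]])
  have b: "Vlt beta lam p taun E zeta imin (taun + w) \<le> V (taun + w) i"
    unfolding Vlt_def using VI_lower_fixed[OF _ _ assms]
    by (auto intro!: Max_leE2)
  show ?thesis using a b V_nonneg by simp
qed


lemma VI_early: "Suc t \<le> taun \<Longrightarrow> V (Suc t) i = Max ((\<lambda>e. - lam * e + zeta i e * beta
                 + (1 - zeta i e) * EV t i) ` E)" by simp

lemma Vu_Suc: "Vu beta lam E zeta imin imax (Suc t) = Vu beta lam E zeta imin imax t +
   Max ((\<lambda>e. - lam * e + zeta imax e * (beta - max 0 (Vl beta lam E zeta imin t))) ` E)"
  by (simp add: Vu_def)

lemma Vut_first: "Vut beta lam p taun E zeta imin imax (Suc taun) =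
   Max ((\<lambda>e. - lam * e + zeta imax e * (p * beta - max (max 0 (Vlt beta lam p taun E zeta imin taun))
      (Vlt beta lam p taun E zeta imin taun))) ` E) + p * Vu beta lam E zeta imin imax taun"
  by (simp add: Vut_def Vu_def)

lemma Vut_later: "taun < t \<Longrightarrow> Vut beta lam p taun E zeta imin imax (Suc t) =
   Vut beta lam p taun E zeta imin imax t +
   Max ((\<lambda>e. - lam * e + zeta imax e * (p * beta - max (max 0 (Vlt beta lam p taun E zeta imin taun))
      (Vlt beta lam p taun E zeta imin t))) ` E)"
  by (simp add: Vut_def)

lemma V_upper_perf: "t \<le> taun \<Longrightarrow> V t i \<le> Vu beta lam E zeta imin imax t"
proof (induction t arbitrary: i)
  case 0 then show ?case by (simp add: Vu_def)
next
  case (Suc t)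
  define L where "L = max 0 (Vl beta lam E zeta imin t)"
  have LG: "L \<le> EV t i" unfolding L_def
    by (rule EV_ge) (use Vl_le[of t] V_nonneg Suc.prems in auto)
  have GB: "EV t i \<le> beta" by (rule EV_le) (use V_upper[of t] Suc in auto)
  have GU: "EV t i \<le> Vu beta lam E zeta imin imax t" by (rule EV_le) (use Suc in auto)
  have "V (Suc t) i \<le> Vu beta lam E zeta imin imax t +
   Max ((\<lambda>e. - lam * e + zeta imax e * (beta - L)) ` E)"
    unfolding VI_early[OF Suc.prems]
  proof (rule Max_leE)
    fix e assume e: "e \<in> E"
    have k: "zeta i e * beta + (1 - zeta i e) * EV t i \<le> zeta imax e * (beta - L) + Vu beta lam E zeta imin imax t"
      by (rule key_up) (use facts(12,15)[OF e] LG GB GU in auto)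
    have "- lam * e + zeta imax e * (beta - L) \<le> Max ((\<lambda>e. - lam * e + zeta imax e * (beta - L)) ` E)"
      by (rule Max_geE[OF e]) simp
    then show "- lam * e + zeta i e * beta + (1 - zeta i e) * EV t i \<le> Vu beta lam E zeta imin imax t +
       Max ((\<lambda>e. - lam * e + zeta imax e * (beta - L)) ` E)" using k by simp
  qed
  then show ?case unfolding Vu_Suc L_def .
qed

lemma V_upper_imp:
  assumes "1 \<le> w"
  shows "V (taun + w) i \<le> Vut beta lam p taun E zeta imin imax (taun + w)"
  using assms
proof (induction w arbitrary: i)
  case 0 then show ?case by simp
next
  case (Suc w)
  show ?case
  proof (cases "w = 0")
    case True
    define L where "L = max (max 0 (Vlt beta lam p taun E zeta imin taun)) (Vlt beta lam p taun E zeta imin taun)"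
    define U where "U = p * Vu beta lam E zeta imin imax taun"
    have G0: "Vl beta lam E zeta imin taun \<le> EV taun i"
      by (rule EV_ge) (use Vl_le[of taun] in auto)
    have G00: "0 \<le> EV taun i" by (rule EV_ge) (use V_nonneg in auto)
    have LG: "L \<le> p * EV taun i"
    proof -
      have h: "Vlt beta lam p taun E zeta imin taun \<le> p * EV taun i"
        by (rule order_trans[OF Vlt_taun], rule mult_left_mono[OF G0]) (use facts(3) in simp)
      then show ?thesis using facts(3) G00 by (auto simp: L_def)
    qed
    have GB: "EV taun i \<le> beta" by (rule EV_le) (use V_upper[of taun] in auto)
    have GU: "EV taun i \<le> Vu beta lam E zeta imin imax taun" by (rule EV_le) (use V_upper_perf in auto)
    have "V (Suc taun) i \<le> Max ((\<lambda>e. - lam * e + zeta imax e * (p * beta - L)) ` E) + U"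
      unfolding VI_first
    proof (rule Max_leE)
      fix e assume e: "e \<in> E"
      have k: "zeta i e * (p * beta) + (1 - zeta i e) * (p * EV taun i) \<le> zeta imax e * (p * beta - L) + U"
        by (rule key_up) (use facts(12,15)[OF e] LG GB GU facts(3) in \<open>auto simp: U_def intro: mult_left_mono\<close>)
      have "- lam * e + zeta imax e * (p * beta - L) \<le> Max ((\<lambda>e. - lam * e + zeta imax e * (p * beta - L)) ` E)"
        by (rule Max_geE[OF e]) simp
      then show "- lam * e + zeta i e * p * beta + p * (1 - zeta i e) * EV taun i \<le>
         Max ((\<lambda>e. - lam * e + zeta imax e * (p * beta - L)) ` E) + U" using k by (simp add: algebra_simps)
    qed
    then show ?thesis unfolding True add_Suc_right add_0_right Vut_first L_def U_def .
  next
    case False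
    have lt: "taun < taun + w" using False by simp
    define L where "L = max (max 0 (Vlt beta lam p taun E zeta imin taun)) (Vlt beta lam p taun E zeta imin (taun + w))"
    define U where "U = Vut beta lam p taun E zeta imin imax (taun + w)"
    have LG: "L \<le> EV (taun + w) i" unfolding L_def
      by (rule EV_ge) (use lower_all False in auto)
    have GB: "EV (taun + w) i \<le> p * beta" by (rule EV_le) (use V_upper[of "taun + w"] False in auto)
    have GU: "EV (taun + w) i \<le> U" unfolding U_def by (rule EV_le) (use Suc False in auto)
    have "V (Suc (taun + w)) i \<le> U + Max ((\<lambda>e. - lam * e + zeta imax e * (p * beta - L)) ` E)"
      unfolding VI_later[OF lt]
    proof (rule Max_leE)
      fix e assume e: "e \<in> E"
      have k: "zeta i e * (p * beta) + (1 - zeta i e) * EV (taun + w) i \<le> zeta imax e * (p * beta - L) + U"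
        by (rule key_up) (use facts(12,15)[OF e] LG GB GU in auto)
      have "- lam * e + zeta imax e * (p * beta - L) \<le> Max ((\<lambda>e. - lam * e + zeta imax e * (p * beta - L)) ` E)"
        by (rule Max_geE[OF e]) simp
      then show "- lam * e + zeta i e * p * beta + (1 - zeta i e) * EV (taun + w) i \<le>
         U + Max ((\<lambda>e. - lam * e + zeta imax e * (p * beta - L)) ` E)" using k by (simp add: algebra_simps)
    qed
    then show ?thesis unfolding add_Suc_right Vut_later[OF lt] L_def U_def .
  qed
qed

end


theorem theorem9:
  fixes beta lam p :: real and taun Dn w :: nat and E :: "real set"
    and zeta :: "'i::finite \<Rightarrow> real \<Rightarrow> real" and P :: "'i \<Rightarrow> 'i \<Rightarrow> real"
    and imin imax i :: 'i
  assumes "setting beta lam p taun Dn E zeta P imin imax"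
    and "1 \<le> w" and "w \<le> Dn"
  shows "max (max 0 (Vlt beta lam p taun E zeta imin taun)) (Vlt beta lam p taun E zeta imin (taun + w))
           \<le> VI beta lam p taun E zeta P (taun + w) i
         \<and> VI beta lam p taun E zeta P (taun + w) i
           \<le> min (p * beta) (Vut beta lam p taun E zeta imin imax (taun + w))"
  using lower_all[OF assms(1,2)] V_upper_imp[OF assms(1,2)] V_upper[OF assms(1), of "taun + w"] assms(2)
  by auto

end
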